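(* Let $0<\nu<1$ and $0\le\mu<1$. Then for all $t>0$, $$t\,f_{\nu,\mu-1}(t)=(\mu-1)\,f_{\nu,\mu}(t)+\nu\, f_{\nu,\mu-\nu}(t),$$ and, since $\frac{d}{dt}f_{\nu,\mu}(t)=f_{\nu,\mu-1}(t)$, $$t\,\frac{d f_{\nu,\mu}(t)}{dt}=(\mu-1)\,f_{\nu,\mu}(t)+\nu\, f_{\nu,\mu-\nu}(t).$$
   Context: For $0<\nu<1$ and real $\rho$, $f_{\nu,\rho}$ denotes the inverse Laplace transform of $s^{-\rho}e^{-s^{\nu}}$: $f_{\nu,\rho}(t)=\frac{1}{2\pi i}\int_{c-i\infty}^{c+i\infty}e^{st}s^{-\rho}e^{-s^{\nu}}\,ds$, $t>0$, $c>0$, principal branches (absolutely convergent for every real $\rho$). *)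

theory Defs
  imports "HOL-Analysis.Analysis"
begin

text \<open>Bromwich-integral definition of f_{nu,rho}(t): the inverse Laplace transform of
  s^(-rho) exp(-s^nu), along the vertical line Re s = c with c = 1 (the value does not depend
  on c > 0). Parametrising s = c + i y gives ds = i dy, so the factor 1/(2 pi i) becomes 1/(2 pi).\<close>

definition bromwich_f :: "real \<Rightarrow> real \<Rightarrow> real \<Rightarrow> complex" where
  "bromwich_f nu rho t =
     (1 / (2 * pi)) *\<^sub>R integral UNIV (\<lambda>y::real.
        let s = Complex 1 y in
        exp (s * of_real t) * s powr (- of_real rho) * exp (- (s powr of_real nu)))"

end

theory Submission
  imports Defs "HOL-Real_Asymp.Real_Asymp"
begin


lemma exp_ge_pow_fact:
  fixes x :: real assumes "0 \<le> x"
  shows "x ^ n / fact n \<le> exp x"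
proof -
  have s: "summable (\<lambda>k. x ^ k /\<^sub>R fact k)" using exp_converges sums_summable by blast
  have "(\<Sum>k\<in>{n}. x ^ k /\<^sub>R fact k) \<le> (\<Sum>k. x ^ k /\<^sub>R fact k)"
    by (rule sum_le_suminf[OF s]) (use assms in auto)
  also have "\<dots> = exp x" using exp_converges sums_unique by metis
  finally show ?thesis by (simp add: divide_inverse_commute)
qed

lemma Re_powr_lower:
  fixes y nu :: real
  assumes "0 < nu" "nu < 1"
  shows "cos (nu * pi / 2) * norm (Complex 1 y) powr nu \<le> Re (Complex 1 y powr of_real nu)"
proof -
  define z where "z = Complex 1 y"
  have z0: "z \<noteq> 0" by (simp add: z_def complex_eq_iff)
  have "\<bar>Im (Ln z)\<bar> < pi/2" by (rule Re_Ln_pos_lt_imp) (simp add: z_def)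
  then have a: "\<bar>nu * Im (Ln z)\<bar> \<le> nu * pi / 2" using assms
    by (simp add: abs_mult mult_left_mono less_imp_le)
    have pn: "pi * nu \<le> pi" using assms pi_gt_zero by (simp add: mult_left_le)
  have "cos (nu * pi / 2) \<le> cos \<bar>nu * Im (Ln z)\<bar>"
    using a pn by (intro cos_monotone_0_pi_le) auto
  then have c: "cos (nu * pi / 2) \<le> cos (nu * Im (Ln z))" by simp
  have "Re (z powr of_real nu) = exp (nu * Re (Ln z)) * cos (nu * Im (Ln z))"
    using z0 by (simp add: powr_def Re_exp)
  also have "exp (nu * Re (Ln z)) = norm z powr nu"
    using z0 by (simp add: powr_def Re_Ln mult.commute)
  finally show ?thesis using c unfolding z_def[symmetric]
    by (simp add: mult.commute mult_left_mono)
qed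

lemma kernel_bound:
  fixes nu rho :: real
  assumes "0 < nu" "nu < 1"
  shows "\<exists>B. \<forall>y. norm (Complex 1 y powr (- of_real rho) * exp (- (Complex 1 y powr of_real nu)))
             \<le> B / (1 + y^2)"
proof -
  define k where "k = cos (nu * pi / 2)"
  have p1: "0 < nu * pi" "nu * pi < pi" using assms by auto
  have k0: "k > 0" unfolding k_def using p1
    by (intro cos_gt_zero_pi; use pi_gt_zero in linarith)
  define n where "n = nat \<lceil>(2 - rho) / nu\<rceil>"
  have nn: "2 - rho \<le> nu * real n"
  proof -
    have "(2 - rho) / nu \<le> real n" unfolding n_def by linarith
    then show ?thesis using assms by (simp add: field_simps)
  qed
  define B where "B = fact n / k ^ n"
  have B0: "B > 0" using k0 by (simp add: B_def)
  show ?thesis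
  proof (intro exI allI)
    fix y :: real
    define z where "z = Complex 1 y"
    define r where "r = norm z"
    have r2: "r^2 = 1 + y^2" by (simp add: r_def z_def cmod_power2)
    have rs: "r = sqrt (1 + y^2)" by (simp add: r_def z_def norm_complex_def)
    have r1: "r \<ge> 1" unfolding rs by simp
    have np: "norm (z powr (- of_real rho)) = r powr (- rho)"
      by (simp add: norm_powr_real_powr' r_def)
    have ne: "norm (exp (- (z powr of_real nu))) = exp (- Re (z powr of_real nu))"
      by simp
    have "k * r powr nu \<le> Re (z powr of_real nu)"
      using Re_powr_lower[OF assms, of y] by (simp add: k_def r_def z_def)
    then have ne2: "norm (exp (- (z powr of_real nu))) \<le> exp (- (k * r powr nu))"
      by (simp add: ne)
    have "(k * r powr nu) ^ n / fact n \<le> exp (k * r powr nu)"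
      using k0 by (intro exp_ge_pow_fact) simp
    then have "exp (- (k * r powr nu)) \<le> fact n / (k * r powr nu) ^ n"
      using k0 r1 by (simp add: exp_minus field_simps)
    also have "\<dots> = B * r powr (- (nu * n))"
      using r1 by (simp add: B_def power_mult_distrib powr_realpow[symmetric] powr_powr
          powr_minus field_simps)
    finally have e: "norm (exp (- (z powr of_real nu))) \<le> B * r powr (- (nu * n))"
      using ne2 by linarith
    have "norm (z powr (- of_real rho) * exp (- (z powr of_real nu)))
          \<le> r powr (- rho) * (B * r powr (- (nu * n)))"
      unfolding norm_mult np by (intro mult_left_mono e) simp
    also have "\<dots> = B * r powr (- rho - nu * n)"
      by (simp add: powr_add[symmetric])
    also have "\<dots> \<le> B * r powr (-2)"
      using B0 r1 nn by (intro mult_left_mono powr_mono) auto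
    also have "\<dots> = B / (1 + y^2)"
      using r1 r2 by (simp add: powr_minus divide_inverse powr_realpow)
    finally show "norm (Complex 1 y powr (- of_real rho) * exp (- (Complex 1 y powr of_real nu)))
             \<le> B / (1 + y^2)" by (simp add: z_def)
  qed
qed



lemma integrable_inv_1_sq: "integrable lborel (\<lambda>y::real. 1 / (1 + y^2))"
proof -
  have "set_integrable lborel (einterval (-\<infinity>) \<infinity>) (\<lambda>y::real. 1 / (1 + y^2))"
  proof (rule interval_integral_FTC_nonneg(1)[where F = arctan and A = "-pi/2" and B = "pi/2"])
    show "\<And>x. DERIV arctan x :> 1 / (1 + x^2)"
      by (auto intro!: derivative_eq_intros simp: field_simps)
    show "((arctan \<circ> real_of_ereal) \<longlongrightarrow> - pi / 2) (at_right (- \<infinity>))"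
      unfolding ereal_tendsto_simps1 using tendsto_arctan_at_bot by simp
    show "((arctan \<circ> real_of_ereal) \<longlongrightarrow> pi / 2) (at_left \<infinity>)"
      unfolding ereal_tendsto_simps1 using tendsto_arctan_at_top by simp
  qed (auto intro!: continuous_intros simp: add_pos_nonneg, smt (verit) zero_le_power2)
  then show ?thesis by (simp add: einterval_eq_UNIV set_integrable_def)
qed

lemma Complex_not_nonpos: "Complex 1 y \<notin> \<real>\<^sub>\<le>\<^sub>0"
  by (auto simp: complex_nonpos_Reals_iff)

lemma cont_Complex: "continuous_on A (\<lambda>y. Complex 1 y)"
  by (simp add: Complex_eq continuous_intros)

lemma cont_K: "continuous_on UNIV (\<lambda>y. exp (Complex 1 y * of_real t) * Complex 1 y powr (- of_real rho) * exp (- (Complex 1 y powr of_real nu)))"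
  by (intro continuous_intros cont_Complex) (auto simp: Complex_not_nonpos complex_eq_iff)


definition KK :: "real \<Rightarrow> real \<Rightarrow> real \<Rightarrow> real \<Rightarrow> complex" where
  "KK nu rho t y = exp (Complex 1 y * of_real t) * Complex 1 y powr (- of_real rho) * exp (- (Complex 1 y powr of_real nu))"

lemma norm_exp_Complex: "norm (exp (Complex 1 y * of_real t)) = exp t"
  by (simp add: norm_exp_eq_Re)

lemma KK_bound:
  assumes "0 < nu" "nu < 1"
  obtains B where "\<And>y t. norm (KK nu rho t y) \<le> exp t * (B / (1 + y^2))"
proof -
  obtain B where B: "\<And>y. norm (Complex 1 y powr (- of_real rho) * exp (- (Complex 1 y powr of_real nu))) \<le> B / (1 + y^2)"
    using kernel_bound[OF assms, of rho] by blast
  have "norm (KK nu rho t y) \<le> exp t * (B / (1 + y^2))" for y t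
    unfolding KK_def mult.assoc norm_mult[of "exp _"] norm_exp_Complex
    by (intro mult_left_mono B) auto
  then show ?thesis using that by blast
qed

lemma cont_KK: "continuous_on UNIV (KK nu rho t)"
  unfolding KK_def using cont_K by (simp add: fun_eq_iff)

lemma meas_KK: "KK nu rho t \<in> borel_measurable lborel"
  using borel_measurable_continuous_onI[OF cont_KK] by simp

lemma integrable_KK:
  assumes "0 < nu" "nu < 1"
  shows "integrable lborel (KK nu rho t)"
proof -
  obtain B where B: "\<And>y t. norm (KK nu rho t y) \<le> exp t * (B / (1 + y^2))"
    using KK_bound[OF assms] by blast
  show ?thesis
  proof (rule Bochner_Integration.integrable_bound[OF _ meas_KK])
    show "integrable lborel (\<lambda>y. exp t * (B / (1 + y^2)))"
      using integrable_inv_1_sq by (intro integrable_mult_right) (simp add: divide_inverse)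
    show "AE x in lborel. norm (KK nu rho t x) \<le> norm (exp t * (B / (1 + x^2)))"
      using B by (intro AE_I2) (smt (verit) real_norm_def)
  qed
qed

lemma bromwich_eq:
  assumes "0 < nu" "nu < 1"
  shows "bromwich_f nu rho t = (1 / (2 * pi)) *\<^sub>R integral\<^sup>L lborel (KK nu rho t)"
proof -
  have "integral UNIV (KK nu rho t) = integral\<^sup>L lborel (KK nu rho t)"
    using has_integral_integral_lborel[OF integrable_KK[OF assms]] by (rule integral_unique)
  then show ?thesis unfolding bromwich_f_def Let_def KK_def[abs_def] by simp
qed


lemma KK_deriv_y:
  "((\<lambda>y. KK nu rho t y) has_vector_derivative
     \<i> * (of_real t * KK nu rho t y - of_real rho * KK nu (rho + 1) t y - of_real nu * KK nu (rho + 1 - nu) t y)) (at y)"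
proof -
  define G where "G s = exp (s * of_real t) * s powr (- of_real rho) * exp (- (s powr of_real nu))" for s :: complex
  define s where "s = Complex 1 y"
  have sn: "s \<notin> \<real>\<^sub>\<le>\<^sub>0" unfolding s_def by (rule Complex_not_nonpos)
  have s0: "s \<noteq> 0" using sn by auto
  have dG: "(G has_field_derivative
      (of_real t * exp (s * of_real t) * s powr (- of_real rho) * exp (- (s powr of_real nu))
       + exp (s * of_real t) * ((- of_real rho) * s powr (- of_real rho - 1)) * exp (- (s powr of_real nu))
       + exp (s * of_real t) * s powr (- of_real rho) * (exp (- (s powr of_real nu)) * (- (of_real nu * s powr (of_real nu - 1))))))
      (at s)"
    unfolding G_def
    using sn by (auto intro!: derivative_eq_intros simp: algebra_simps)
  have dS: "((\<lambda>y. Complex 1 y) has_vector_derivative \<i>) (at y)"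
    unfolding Complex_eq by (auto intro!: derivative_eq_intros)
  have "((G \<circ> (\<lambda>y. Complex 1 y)) has_vector_derivative \<i> * (
      of_real t * exp (s * of_real t) * s powr (- of_real rho) * exp (- (s powr of_real nu))
       + exp (s * of_real t) * ((- of_real rho) * s powr (- of_real rho - 1)) * exp (- (s powr of_real nu))
       + exp (s * of_real t) * s powr (- of_real rho) * (exp (- (s powr of_real nu)) * (- (of_real nu * s powr (of_real nu - 1))))))
      (at y)"
    using field_vector_diff_chain_at[OF dS dG[unfolded s_def]] by (simp add: s_def)
  moreover have "G \<circ> (\<lambda>y. Complex 1 y) = (\<lambda>y. KK nu rho t y)"
    by (simp add: fun_eq_iff G_def KK_def)
  moreover have "s powr (- of_real rho - 1) = s powr (- of_real (rho + 1))"
    by (rule arg_cong[where f="\<lambda>a. s powr a"]) simp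
  moreover have "s powr (- of_real rho) * s powr (of_real nu - 1) = s powr (- of_real (rho + 1 - nu))"
    by (simp add: powr_add[symmetric] algebra_simps)
  ultimately show ?thesis
    unfolding KK_def s_def[symmetric] by (simp add: algebra_simps)
qed


lemma isCont_KK: "isCont (KK nu rho t) x"
  using cont_KK continuous_on_eq_continuous_at[OF open_UNIV] by blast

lemma KK_lim:
  assumes "0 < nu" "nu < 1"
  shows "(KK nu rho t \<longlongrightarrow> 0) at_top" "(KK nu rho t \<longlongrightarrow> 0) at_bot"
proof -
  obtain B where B: "\<And>y t. norm (KK nu rho t y) \<le> exp t * (B / (1 + y^2))"
    using KK_bound[OF assms] by blast
  have "((\<lambda>y::real. 1 / (1 + y^2)) \<longlongrightarrow> 0) at_top" by real_asymp
  then have "((\<lambda>y::real. exp t * (B * (1 / (1 + y^2)))) \<longlongrightarrow> 0) at_top"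
    by (intro tendsto_mult_right_zero)
  then have "((\<lambda>y::real. exp t * (B / (1 + y^2))) \<longlongrightarrow> 0) at_top" by simp
  then show "(KK nu rho t \<longlongrightarrow> 0) at_top"
    by (rule Lim_null_comparison[OF always_eventually[OF allI[OF B[of t]]]])
  have "((\<lambda>y::real. 1 / (1 + y^2)) \<longlongrightarrow> 0) at_bot" by real_asymp
  then have "((\<lambda>y::real. exp t * (B * (1 / (1 + y^2)))) \<longlongrightarrow> 0) at_bot"
    by (intro tendsto_mult_right_zero)
  then have "((\<lambda>y::real. exp t * (B / (1 + y^2))) \<longlongrightarrow> 0) at_bot" by simp
  then show "(KK nu rho t \<longlongrightarrow> 0) at_bot"
    by (rule Lim_null_comparison[OF always_eventually[OF allI[OF B[of t]]]])
qed

lemma identity_KK: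
  assumes "0 < nu" "nu < 1"
  shows "of_real t * integral\<^sup>L lborel (KK nu rho t)
    = of_real rho * integral\<^sup>L lborel (KK nu (rho + 1) t) + of_real nu * integral\<^sup>L lborel (KK nu (rho + 1 - nu) t)"
proof -
  define f where "f y = \<i> * (of_real t * KK nu rho t y - of_real rho * KK nu (rho + 1) t y - of_real nu * KK nu (rho + 1 - nu) t y)" for y
  have fint: "integrable lborel f"
    unfolding f_def by (auto intro!: integrable_mult_right integrable_diff integrable_KK[OF assms])
  have "(LBINT y=-\<infinity>..\<infinity>. f y) = 0 - 0"
  proof (rule interval_integral_FTC_integrable[where F = "KK nu rho t"])
    show "\<And>x. - \<infinity> < ereal x \<Longrightarrow> ereal x < \<infinity> \<Longrightarrow> (KK nu rho t has_vector_derivative f x) (at x)"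
      unfolding f_def by (rule KK_deriv_y)
    show "\<And>x. - \<infinity> < ereal x \<Longrightarrow> ereal x < \<infinity> \<Longrightarrow> isCont f x"
      unfolding f_def by (intro continuous_intros isCont_KK)
    show "set_integrable lborel (einterval (- \<infinity>) \<infinity>) f"
      using fint by (simp add: einterval_eq_UNIV set_integrable_def)
    show "((KK nu rho t \<circ> real_of_ereal) \<longlongrightarrow> 0) (at_right (- \<infinity>))"
      unfolding ereal_tendsto_simps1 by (rule KK_lim[OF assms])
    show "((KK nu rho t \<circ> real_of_ereal) \<longlongrightarrow> 0) (at_left \<infinity>)"
      unfolding ereal_tendsto_simps1 by (rule KK_lim[OF assms])
  qed simp
  then have "integral\<^sup>L lborel f = 0"
    by (simp add: interval_lebesgue_integral_def einterval_eq_UNIV set_lebesgue_integral_def)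
  also have "integral\<^sup>L lborel f = \<i> * (of_real t * integral\<^sup>L lborel (KK nu rho t)
      - of_real rho * integral\<^sup>L lborel (KK nu (rho + 1) t) - of_real nu * integral\<^sup>L lborel (KK nu (rho + 1 - nu) t))"
    unfolding f_def using integrable_KK[OF assms]
    by (simp add: integral_mult_right_zero integral_diff integrable_mult_right integrable_diff)
  finally have "of_real t * integral\<^sup>L lborel (KK nu rho t)
      - of_real rho * integral\<^sup>L lborel (KK nu (rho + 1) t) - of_real nu * integral\<^sup>L lborel (KK nu (rho + 1 - nu) t) = 0"
    by simp
  then show ?thesis by (simp only: diff_diff_eq right_minus_eq)
qed


lemma exp_diff_bound:
  fixes s :: complex and t h :: real
  assumes "Re s = 1" "\<bar>h\<bar> \<le> 1"
  shows "norm (exp (s * of_real (t + h)) - exp (s * of_real t)) \<le> norm s * exp (t + 1) * \<bar>h\<bar>"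
proof -
  have "norm (exp (s * of_real (t + h)) - exp (s * of_real t)) \<le> (norm s * exp (t + 1)) * norm ((t + h) - t)"
  proof (rule differentiable_bound[where S = "{t - 1 .. t + 1}" and f' = "\<lambda>x d. d *\<^sub>R (s * exp (s * of_real x))"])
    show "convex {t - 1..t + 1}" by simp
    fix x assume x: "x \<in> {t - 1..t + 1}"
    have "((\<lambda>z. exp (s * z)) has_field_derivative (s * exp (s * of_real x))) (at (of_real x))"
      by (auto intro!: derivative_eq_intros)
    from has_vector_derivative_real_field[OF this]
    have "((\<lambda>x. exp (s * of_real x)) has_vector_derivative (s * exp (s * of_real x))) (at x within {t - 1..t + 1})"
      by (rule has_vector_derivative_at_within)
    then show "((\<lambda>x. exp (s * of_real x)) has_derivative (\<lambda>d. d *\<^sub>R (s * exp (s * of_real x)))) (at x within {t - 1..t + 1})"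
      by (simp add: has_vector_derivative_def)
    have "norm (s * exp (s * of_real x)) = norm s * exp x"
      using assms by (simp add: norm_mult norm_exp_eq_Re)
    also have "\<dots> \<le> norm s * exp (t + 1)" using x by (intro mult_left_mono) auto
    finally have nb: "norm (s * exp (s * of_real x)) \<le> norm s * exp (t + 1)" .
    show "onorm (\<lambda>d. d *\<^sub>R (s * exp (s * of_real x))) \<le> norm s * exp (t + 1)"
    proof (rule onorm_le)
      fix d :: real
      show "norm (d *\<^sub>R (s * exp (s * of_real x))) \<le> norm s * exp (t + 1) * norm d"
        using nb by (simp add: mult.commute mult_left_mono)
    qed
  qed (use assms in auto)
  then show ?thesis by simp
qed

lemma exp_quot_lim:
  fixes s :: complex and t :: real
  shows "((\<lambda>h. (exp (s * of_real (t + h)) - exp (s * of_real t)) / of_real h) \<longlongrightarrow> s * exp (s * of_real t)) (at 0)"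
proof -
  have "((\<lambda>z. exp (s * z)) has_field_derivative s * exp (s * of_real t)) (at (of_real t))"
    by (auto intro!: derivative_eq_intros)
  then have L: "((\<lambda>w. (exp (s * w) - exp (s * of_real t)) / (w - of_real t)) \<longlongrightarrow> s * exp (s * of_real t)) (at (of_real t))"
    by (simp add: has_field_derivative_iff)
  have F: "filterlim (\<lambda>h::real. of_real (t + h) :: complex) (at (of_real t)) (at 0)"
  proof (rule filterlim_atI)
    show "((\<lambda>h::real. of_real (t + h) :: complex) \<longlongrightarrow> of_real t) (at 0)"
      by (auto intro!: tendsto_eq_intros)
    show "\<forall>\<^sub>F x in at 0. (of_real (t + x) :: complex) \<noteq> of_real t"
      by (auto simp: eventually_at_filter)
  qed
  show ?thesis using filterlim_compose[OF L F] by (simp add: o_def)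
qed


lemma KK_split: "KK nu mu x y = exp (Complex 1 y * of_real x) * (Complex 1 y powr (- of_real mu) * exp (- (Complex 1 y powr of_real nu)))"
  by (simp add: KK_def mult.assoc)

lemma KK_shift: "KK nu (mu - 1) x y = Complex 1 y * KK nu mu x y"
proof -
  have "Complex 1 y powr (- of_real (mu - 1)) = Complex 1 y powr (1 + - of_real mu)"
    by (rule arg_cong[where f="\<lambda>a. Complex 1 y powr a"]) simp
  also have "\<dots> = Complex 1 y * Complex 1 y powr (- of_real mu)"
    by (simp only: powr_add powr_to_1)
  finally show ?thesis by (simp add: KK_def algebra_simps)
qed

lemma deriv_KK:
  assumes "0 < nu" "nu < 1"
  shows "((\<lambda>x. integral\<^sup>L lborel (KK nu mu x)) has_vector_derivative integral\<^sup>L lborel (KK nu (mu - 1) t)) (at t)"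
proof -
  define J where "J x = integral\<^sup>L lborel (KK nu mu x)" for x
  define J1 where "J1 = integral\<^sup>L lborel (KK nu (mu - 1) t)"
  define P where "P y = Complex 1 y powr (- of_real mu) * exp (- (Complex 1 y powr of_real nu))" for y
  define D where "D h y = (KK nu mu (t + h) y - KK nu mu t y) / of_real h" for h y
  obtain B where B: "\<And>y t. norm (KK nu (mu - 1) t y) \<le> exp t * (B / (1 + y^2))"
    using KK_bound[OF assms] by blast
  have QD: "(J (t + h) - J t) / of_real h = integral\<^sup>L lborel (D h)" for h
    unfolding J_def D_def using integrable_KK[OF assms]
    by (simp add: integral_diff)
  have Dlim: "((\<lambda>h. D h y) \<longlongrightarrow> KK nu (mu - 1) t y) (at 0)" for y
  proof -
    have "((\<lambda>h. (exp (Complex 1 y * of_real (t + h)) - exp (Complex 1 y * of_real t)) / of_real h * P y)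
          \<longlongrightarrow> Complex 1 y * exp (Complex 1 y * of_real t) * P y) (at 0)"
      by (intro tendsto_mult exp_quot_lim tendsto_const)
    moreover have "(exp (Complex 1 y * of_real (t + h)) - exp (Complex 1 y * of_real t)) / of_real h * P y = D h y" for h
      unfolding D_def KK_split P_def by (simp add: field_simps)
    moreover have "Complex 1 y * exp (Complex 1 y * of_real t) * P y = KK nu (mu - 1) t y"
      by (subst KK_shift) (simp only: KK_split P_def mult.assoc)
    ultimately show ?thesis by simp
  qed
  have Dbound: "norm (D h y) \<le> exp (t + 1) * (B / (1 + y^2))" if h: "\<bar>h\<bar> \<le> 1" "h \<noteq> 0" for h y
  proof -
    have "norm (D h y) = norm (exp (Complex 1 y * of_real (t + h)) - exp (Complex 1 y * of_real t)) / \<bar>h\<bar> * norm (P y)"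
      unfolding D_def KK_split P_def
      by (simp add: norm_divide norm_mult ring_distribs[symmetric] mult.assoc[symmetric] left_diff_distrib[symmetric])
    also have "\<dots> \<le> (norm (Complex 1 y) * exp (t + 1) * \<bar>h\<bar>) / \<bar>h\<bar> * norm (P y)"
      by (intro mult_right_mono divide_right_mono exp_diff_bound h) auto
    also have "\<dots> = exp (t + 1) * norm (KK nu (mu - 1) 0 y)"
      using h by (subst KK_shift) (simp add: KK_split P_def norm_mult)
    also have "\<dots> \<le> exp (t + 1) * (B / (1 + y^2))"
      using B[of 0 y] by (intro mult_left_mono) auto
    finally show ?thesis .
  qed
  have Qlim: "((\<lambda>h. (J (t + h) - J t) / of_real h) \<longlongrightarrow> J1) (at 0)"
  proof -
    have "((\<lambda>h. (J (t + h) - J t) / of_real h) \<longlongrightarrow> J1) (at 0 within {-1<..<1})"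
    proof (subst tendsto_at_iff_sequentially, intro allI impI)
      fix X :: "nat \<Rightarrow> real"
      assume X: "\<forall>i. X i \<in> {-1<..<1} - {0}" and X0: "X \<longlonglongrightarrow> 0"
      have "(\<lambda>i. integral\<^sup>L lborel (D (X i))) \<longlonglongrightarrow> integral\<^sup>L lborel (KK nu (mu - 1) t)"
      proof (rule integral_dominated_convergence[where w = "\<lambda>y. exp (t + 1) * (B / (1 + y^2))"])
        show "KK nu (mu - 1) t \<in> borel_measurable lborel" by (rule meas_KK)
        show "D (X i) \<in> borel_measurable lborel" for i
          unfolding D_def by (intro borel_measurable_divide borel_measurable_diff meas_KK) auto
        show "integrable lborel (\<lambda>y. exp (t + 1) * (B / (1 + y^2)))"
          using integrable_inv_1_sq by (intro integrable_mult_right) (simp add: divide_inverse)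
        show "AE y in lborel. (\<lambda>i. D (X i) y) \<longlonglongrightarrow> KK nu (mu - 1) t y"
        proof (rule AE_I2)
          fix y
          have "filterlim X (at 0) sequentially"
            using X X0 by (intro filterlim_atI) auto
          from filterlim_compose[OF Dlim this] show "(\<lambda>i. D (X i) y) \<longlonglongrightarrow> KK nu (mu - 1) t y" .
        qed
        show "AE y in lborel. norm (D (X i) y) \<le> exp (t + 1) * (B / (1 + y^2))" for i
        proof (rule AE_I2, rule Dbound)
          have Xi: "X i \<in> {-1<..<1} - {0}" using X by blast
          then show "\<bar>X i\<bar> \<le> 1" by (simp add: abs_le_iff)
          show "X i \<noteq> 0" using Xi by simp
        qed
      qed
      then show "((\<lambda>h. (J (t + h) - J t) / of_real h) \<circ> X) \<longlonglongrightarrow> J1"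
        by (simp add: o_def QD J1_def)
    qed
    moreover have e: "at (0::real) within {-1<..<1} = at 0" by (rule at_within_open) auto
    ultimately show ?thesis by simp
  qed
  have "((\<lambda>h. norm (J (t + h) - J t - h *\<^sub>R J1) / norm h) \<longlongrightarrow> 0) (at 0)"
  proof -
    have "((\<lambda>h. norm ((J (t + h) - J t) / of_real h - J1)) \<longlongrightarrow> 0) (at 0)"
      using Qlim by (intro tendsto_norm_zero) (simp add: LIM_zero_iff)
    moreover have "\<forall>\<^sub>F h in at 0. norm ((J (t + h) - J t) / of_real h - J1) = norm (J (t + h) - J t - h *\<^sub>R J1) / norm h"
    proof -
      have "norm ((J (t + h) - J t) / of_real h - J1) = norm (J (t + h) - J t - h *\<^sub>R J1) / norm h" if "h \<noteq> 0" for h :: real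
      proof -
        have "(J (t + h) - J t) / of_real h - J1 = (J (t + h) - J t - h *\<^sub>R J1) / of_real h"
          using that by (simp add: field_simps scaleR_conv_of_real)
        then show ?thesis by (simp add: norm_divide)
      qed
      then show ?thesis by (auto simp: eventually_at_filter)
    qed
    ultimately show ?thesis by (rule Lim_transform_eventually)
  qed
  then have "(J has_derivative (\<lambda>h. h *\<^sub>R J1)) (at t)"
    unfolding has_derivative_at by (simp add: bounded_linear_scaleR_left)
  then show ?thesis unfolding has_vector_derivative_def J_def J1_def .
qed


theorem mainTheorem4:
  fixes nu mu t :: real
  assumes "0 < nu" "nu < 1" "0 \<le> mu" "mu < 1" "0 < t"
  shows "of_real t * bromwich_f nu (mu - 1) t
           = of_real (mu - 1) * bromwich_f nu mu t + of_real nu * bromwich_f nu (mu - nu) t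
    \<and> ((\<lambda>x. bromwich_f nu mu x) has_vector_derivative bromwich_f nu (mu - 1) t) (at t)
    \<and> of_real t * vector_derivative (\<lambda>x. bromwich_f nu mu x) (at t)
           = of_real (mu - 1) * bromwich_f nu mu t + of_real nu * bromwich_f nu (mu - nu) t"
proof -
  note nu = assms(1,2)
  define c where "c = 1 / (2 * pi)"
  have bf: "\<And>r x. bromwich_f nu r x = c *\<^sub>R integral\<^sup>L lborel (KK nu r x)"
    unfolding c_def by (rule bromwich_eq[OF nu])
  have id: "of_real t * integral\<^sup>L lborel (KK nu (mu - 1) t)
      = of_real (mu - 1) * integral\<^sup>L lborel (KK nu mu t) + of_real nu * integral\<^sup>L lborel (KK nu (mu - nu) t)"
    using identity_KK[OF nu, of t "mu - 1"] by simp
  have P1: "of_real t * bromwich_f nu (mu - 1) t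
           = of_real (mu - 1) * bromwich_f nu mu t + of_real nu * bromwich_f nu (mu - nu) t"
  proof -
    have "of_real t * bromwich_f nu (mu - 1) t = c *\<^sub>R (of_real t * integral\<^sup>L lborel (KK nu (mu - 1) t))"
      unfolding bf by simp
    also have "\<dots> = c *\<^sub>R (of_real (mu - 1) * integral\<^sup>L lborel (KK nu mu t) + of_real nu * integral\<^sup>L lborel (KK nu (mu - nu) t))"
      by (simp only: id)
    also have "\<dots> = of_real (mu - 1) * bromwich_f nu mu t + of_real nu * bromwich_f nu (mu - nu) t"
      unfolding bf by (simp add: scaleR_add_right)
    finally show ?thesis .
  qed
  have P2: "((\<lambda>x. bromwich_f nu mu x) has_vector_derivative bromwich_f nu (mu - 1) t) (at t)"
  proof -
    have "((\<lambda>x. c *\<^sub>R integral\<^sup>L lborel (KK nu mu x)) has_vector_derivative c *\<^sub>R integral\<^sup>L lborel (KK nu (mu - 1) t)) (at t)"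
      using has_vector_derivative_scaleR[OF DERIV_const deriv_KK[OF nu, of mu t]] by simp
    then show ?thesis unfolding bf .
  qed
  have P3: "vector_derivative (\<lambda>x. bromwich_f nu mu x) (at t) = bromwich_f nu (mu - 1) t"
    using P2 by (rule vector_derivative_at)
  show ?thesis using P1 P2 P3 by simp
qed

end
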